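(* Let $m$ be a positive integer satisfying $\sigma(m)\equiv 0\pmod m$, $\sigma_2(m)\equiv 2\pmod m$ and $m\equiv 0\pmod 4$. Then all odd prime factors of $m$ except exactly one occur in $m$ with even multiplicity. The remaining odd prime factor $q$ occurs with multiplicity congruent to $1 \bmod 4$, and $q\equiv 3\pmod 4$.
   Context: For integers $k\ge 0$ and $n\ge 1$, $\sigma_k(n)=\sum_{d\mid n} d^k$, and $\sigma=\sigma_1$. *)

theory Defs
  imports "HOL-Number_Theory.Number_Theory"
begin

definition sigma_k :: "nat \<Rightarrow> nat \<Rightarrow> nat" where
  "sigma_k k n = (\<Sum>d\<in>{d. d dvd n}. d ^ k)"

abbreviation sigma :: "nat \<Rightarrow> nat" where
  "sigma n \<equiv> sigma_k 1 n"

end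

theory Submission
  imports Defs
begin

lemma sigma_mult:
  fixes a b :: nat
  assumes "a > 0" "b > 0" "coprime a b"
  shows "sigma_k k (a*b) = sigma_k k a * sigma_k k b"
proof -
  let ?f = "\<lambda>(x,y). x*(y::nat)"
  have fin: "finite {x. x dvd c}" if "c > 0" for c :: nat
    using that by (simp add: finite_divisors_nat)
  have img: "{d. d dvd a*b} = ?f ` ({x. x dvd a} \<times> {y. y dvd b})"
  proof
    show "{d. d dvd a*b} \<subseteq> ?f ` ({x. x dvd a} \<times> {y. y dvd b})"
    proof
      fix d assume "d \<in> {d. d dvd a*b}"
      then obtain x y where "d = x*y" "x dvd a" "y dvd b" by (auto elim: dvd_productE)
      then show "d \<in> ?f ` ({x. x dvd a} \<times> {y. y dvd b})" by force
    qed
  qed (auto intro: mult_dvd_mono)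
  have inj: "inj_on ?f ({x. x dvd a} \<times> {y. y dvd b})"
  proof (rule inj_onI, clarsimp)
    fix x1 y1 x2 y2 :: nat
    assume h: "x1 dvd a" "y1 dvd b" "x2 dvd a" "y2 dvd b" "x1*y1 = x2*y2"
    have c1: "coprime x1 y2" using h assms(3) coprime_imp_coprime by (meson coprime_divisors)
    have c2: "coprime x2 y1" using h assms(3) by (meson coprime_divisors)
    have "x1 dvd x2*y2" using h(5) by (metis dvd_triv_left)
    then have "x1 dvd x2" using c1 coprime_dvd_mult_left_iff by blast
    moreover have "x2 dvd x1*y1" using h(5) by (metis dvd_triv_left)
    then have "x2 dvd x1" using c2 coprime_dvd_mult_left_iff by blast
    ultimately have "x1 = x2" by (simp add: dvd_antisym)
    moreover have "x1 > 0" using h(1) assms(1) by (metis dvd_0_left_iff gr0I)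
    ultimately show "x1 = x2 \<and> y1 = y2" using h(5) by simp
  qed
  have "sigma_k k (a*b) = (\<Sum>p\<in>{x. x dvd a} \<times> {y. y dvd b}. (?f p)^k)"
    unfolding sigma_k_def img by (simp add: sum.reindex[OF inj])
  also have "\<dots> = (\<Sum>x\<in>{x. x dvd a}. \<Sum>y\<in>{y. y dvd b}. x^k * y^k)"
    by (simp add: sum.cartesian_product power_mult_distrib split_def)
  also have "\<dots> = sigma_k k a * sigma_k k b"
    unfolding sigma_k_def by (simp add: sum_product)
  finally show ?thesis .
qed

lemma sigma_prod:
  fixes P :: "nat set"
  assumes "finite P" "\<And>p. p \<in> P \<Longrightarrow> prime p"
  shows "sigma_k k (\<Prod>p\<in>P. p ^ e p) = (\<Prod>p\<in>P. sigma_k k (p ^ e p))"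
  using assms
proof (induction P rule: finite_induct)
  case empty
  then show ?case by (simp add: sigma_k_def)
next
  case (insert x F)
  have cop: "coprime (x ^ e x) (\<Prod>p\<in>F. p ^ e p)"
    apply (rule prod_coprime_right)
    using insert by (metis coprime_power_left_iff coprime_power_right_iff insertCI primes_coprime)
  have pos1: "x ^ e x > 0" using insert prime_gt_0_nat by simp
  have pos2: "(\<Prod>p\<in>F. p ^ e p) > 0" using insert prime_gt_0_nat
    by (simp add: prod_pos)
  show ?case using insert sigma_mult[OF pos1 pos2 cop] by simp
qed

lemma sigma_factor:
  fixes n :: nat
  assumes "n > 0"
  shows "sigma_k k n = (\<Prod>p\<in>prime_factors n. sigma_k k (p ^ multiplicity p n))"
proof -
  have "n = (\<Prod>p\<in>prime_factors n. p ^ multiplicity p n)"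
    using prod_prime_factors[of n] assms by simp
  then have "sigma_k k n = sigma_k k (\<Prod>p\<in>prime_factors n. p ^ multiplicity p n)" by simp
  also have "\<dots> = (\<Prod>p\<in>prime_factors n. sigma_k k (p ^ multiplicity p n))"
    by (rule sigma_prod) auto
  finally show ?thesis .
qed

lemma sigma_primepow:
  fixes p :: nat
  assumes "prime p"
  shows "sigma_k k (p ^ e) = (\<Sum>i\<le>e. (p^k)^i)"
proof -
  have img: "{d. d dvd p^e} = (\<lambda>i. p^i) ` {..e}"
    using divides_primepow_nat[OF assms] by auto
  have inj: "inj_on (\<lambda>i. p^i) {..e}"
    using assms prime_gt_1_nat by (auto intro!: inj_onI simp: power_inject_exp)
  show ?thesis unfolding sigma_k_def img
    by (simp add: sum.reindex[OF inj] power_mult[symmetric] mult.commute)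
qed

lemma geom_cong:
  fixes p r :: nat
  assumes "[p = 1] (mod r)"
  shows "[(\<Sum>i\<le>e. p^i) = e+1] (mod r)"
proof -
  have "[(\<Sum>i\<le>e. p^i) = (\<Sum>i\<le>e. 1^i)] (mod r)"
    by (intro cong_sum cong_pow assms)
  then show ?thesis by simp
qed

lemma geom_odd:
  fixes b :: nat
  assumes "even b"
  shows "odd (\<Sum>i\<le>e. b^i)"
  using assms by (induction e) auto


lemma mod4_aux:
  fixes x y z :: nat
  assumes "x = y * z" "x mod 4 = 2" "even y"
  shows "y mod 4 = 2"
proof -
  have "\<not> 4 dvd y"
  proof
    assume "4 dvd y"
    then have "4 dvd x" using assms(1) by simp
    then show False using assms(2) by simp
  qed
  then show ?thesis using assms(3) by presburger
qed

lemma prod_two_mod4: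
  fixes g :: "nat \<Rightarrow> nat"
  assumes fin: "finite P" and h: "(\<Prod>p\<in>P. g p) mod 4 = 2"
  shows "\<exists>!q. q \<in> P \<and> even (g q)"
    and "\<And>q. q \<in> P \<Longrightarrow> even (g q) \<Longrightarrow> g q mod 4 = 2"
    and "\<And>a b. a \<in> P \<Longrightarrow> even (g a) \<Longrightarrow> b \<in> P \<Longrightarrow> even (g b) \<Longrightarrow> a = b"
proof -
  have ev: "even (\<Prod>p\<in>P. g p)" using h dvd_mod_iff[of 2 4 "\<Prod>p\<in>P. g p"] by simp
  then obtain q where q: "q \<in> P" "even (g q)" using even_prod_iff[OF fin] by blast
  have uniq: "r = q" if rr: "r \<in> P" "even (g r)" for r
  proof (rule ccontr)
    assume ne: "r \<noteq> q"
    have e1: "(\<Prod>p\<in>P. g p) = g q * (\<Prod>p\<in>P-{q}. g p)" using prod.remove[OF fin q(1)] .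
    have "r \<in> P - {q}" using rr(1) ne by simp
    then have e2: "(\<Prod>p\<in>P-{q}. g p) = g r * (\<Prod>p\<in>P-{q}-{r}. g p)"
      using prod.remove[of "P-{q}" r g] fin by simp
    obtain a where a: "g q = 2*a" using q(2) by blast
    obtain b where b: "g r = 2*b" using rr(2) by blast
    have "(\<Prod>p\<in>P. g p) = 4 * (a*b*(\<Prod>p\<in>P-{q}-{r}. g p))" unfolding e1 e2 a b by simp
    then show False using h by simp
  qed
  show "\<exists>!q. q \<in> P \<and> even (g q)"
  proof (rule ex1I[of _ q])
    show "q \<in> P \<and> even (g q)" using q by simp
  next
    fix r assume "r \<in> P \<and> even (g r)"
    then show "r = q" using uniq by simp
  qed
  show "\<And>a b. a \<in> P \<Longrightarrow> even (g a) \<Longrightarrow> b \<in> P \<Longrightarrow> even (g b) \<Longrightarrow> a = b"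
  proof -
    fix a b assume "a \<in> P" "even (g a)" "b \<in> P" "even (g b)"
    then have "a = q" "b = q" using uniq by auto
    then show "a = b" by simp
  qed
  fix r assume r: "r \<in> P" "even (g r)"
  have "(\<Prod>p\<in>P. g p) = g r * (\<Prod>p\<in>P-{r}. g p)" using prod.remove[OF fin r(1)] .
  then show "g r mod 4 = 2" using mod4_aux h r(2) by blast
qed

theorem mainTheorem6:
  fixes m :: nat
  assumes "m > 0"
    and "[sigma m = 0] (mod m)"
    and "[sigma_k 2 m = 2] (mod m)"
    and "[m = 0] (mod 4)"
  shows "(\<exists>!q. q \<in> prime_factors m \<and> odd q \<and> odd (multiplicity q m)) \<and>
         (\<forall>q. q \<in> prime_factors m \<and> odd q \<and> odd (multiplicity q m) \<longrightarrow>
           [multiplicity q m = 1] (mod 4) \<and> [q = 3] (mod 4))"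
proof -
  let ?P = "prime_factors m"
  let ?e = "\<lambda>p. multiplicity p m"
  define g where "g p = sigma_k 2 (p ^ ?e p)" for p
  define s where "s p = sigma (p ^ ?e p)" for p
  have fin: "finite ?P" by simp
  have m4: "4 dvd m" using assms(4) by (simp add: cong_0_iff)
  have s2: "sigma_k 2 m mod 4 = 2"
  proof -
    have "sigma_k 2 m mod m = 2 mod m" using assms(3) by (simp add: cong_def)
    then have "sigma_k 2 m mod m mod 4 = 2 mod m mod 4" by simp
    then show ?thesis using m4 by (simp add: mod_mod_cancel)
  qed
  have s1: "4 dvd sigma m"
  proof -
    have "m dvd sigma m" using assms(2) by (simp add: cong_0_iff)
    then show ?thesis using m4 by (rule dvd_trans[rotated])
  qed
  have gprod: "(\<Prod>p\<in>?P. g p) mod 4 = 2"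
    using s2 sigma_factor[OF assms(1), of 2] unfolding g_def by simp
  have sprod: "sigma m = (\<Prod>p\<in>?P. s p)"
    using sigma_factor[OF assms(1), of 1] unfolding s_def by simp
  have gp: "g p = (\<Sum>i\<le>?e p. (p^2)^i)" if "p \<in> ?P" for p
    unfolding g_def using that sigma_primepow by auto
  have sp: "s p = (\<Sum>i\<le>?e p. p^i)" if "p \<in> ?P" for p
    unfolding s_def using that sigma_primepow[of p 1] by auto
  have godd_cong: "g p mod 4 = (?e p + 1) mod 4" if pP: "p \<in> ?P" and po: "odd p" for p
  proof -
    have "[p^2 = 1] (mod 4)"
    proof -
      obtain k where "p = 2*k+1" using po oddE by blast
      then have "p^2 = 4*(k*k+k) + 1" by (simp add: power2_eq_square algebra_simps)
      then show ?thesis by (simp add: cong_def)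
    qed
    from geom_cong[OF this, of "?e p"] show ?thesis using gp[OF pP] by (simp add: cong_def)
  qed
  have g2: "odd (g p)" if "p \<in> ?P" "even p" for p
    using gp[OF that(1)] geom_odd[of "p^2"] that(2) by simp
  have key: "(q \<in> ?P \<and> odd q \<and> odd (?e q)) \<longleftrightarrow> (q \<in> ?P \<and> even (g q))" for q
  proof (cases "q \<in> ?P \<and> odd q")
    case True
    then have "g q mod 4 = (?e q + 1) mod 4" using godd_cong by blast
    then have "even (g q) \<longleftrightarrow> even (?e q + 1)" by presburger
    then show ?thesis using True by simp
  next
    case False
    then show ?thesis using g2 by auto
  qed
  have ex1: "\<exists>!q. q \<in> ?P \<and> even (g q)" using prod_two_mod4(1)[OF fin gprod] .
  have part2: "[?e q = 1] (mod 4) \<and> [q = 3] (mod 4)"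
    if q: "q \<in> ?P" "odd q" "odd (?e q)" for q
  proof -
    have geq: "even (g q)" using key q by blast
    have "g q mod 4 = 2" using prod_two_mod4(2)[OF fin gprod q(1) geq] .
    then have e2: "(?e q + 1) mod 4 = 2" using godd_cong q by simp
    then have c1: "[?e q = 1] (mod 4)" by (simp add: cong_def) presburger
    have others: "odd (s p)" if "p \<in> ?P - {q}" for p
    proof (cases "even p")
      case True
      have "p \<in> ?P" using that by simp
      then show ?thesis using sp[OF \<open>p \<in> ?P\<close>] geom_odd[OF True, of "?e p"] by simp
    next
      case False
      then have "p \<in> ?P" "odd p" using that by auto
      have "p \<noteq> q" using that by simp
      then have "even (g p) = False" using prod_two_mod4(3)[OF fin gprod \<open>p \<in> ?P\<close> _ q(1) geq] by blast
      then have "even (?e p)" using key[of p] \<open>p \<in> ?P\<close> \<open>odd p\<close> by blast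
      have "[p = 1] (mod 2)" using False by (simp add: cong_def odd_iff_mod_2_eq_one)
      from geom_cong[OF this, of "?e p"] have "(s p) mod 2 = (?e p + 1) mod 2"
        using sp[OF \<open>p \<in> ?P\<close>] by (simp add: cong_def)
      moreover have "odd (Suc (?e p))" using \<open>even (?e p)\<close> by simp
      ultimately show ?thesis by (metis odd_iff_mod_2_eq_one Suc_eq_plus1)
    qed
    have "odd (\<Prod>p\<in>?P-{q}. s p)" using others even_prod_iff[of "?P-{q}" s] by auto
    then have "coprime 2 (\<Prod>p\<in>?P-{q}. s p)" by simp
    then have "coprime (2^2) (\<Prod>p\<in>?P-{q}. s p)"
      using coprime_power_left_iff[of 2 2 "\<Prod>p\<in>?P-{q}. s p"] by blast
    then have cop: "coprime 4 (\<Prod>p\<in>?P-{q}. s p)" by simp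
    have "sigma m = s q * (\<Prod>p\<in>?P-{q}. s p)" using sprod prod.remove[OF fin q(1), of s] by simp
    then have "4 dvd s q * (\<Prod>p\<in>?P-{q}. s p)" using s1 by simp
    then have "4 dvd s q" using coprime_dvd_mult_left_iff[OF cop] by blast
    have c2: "[q = 3] (mod 4)"
    proof (rule ccontr)
      assume "\<not> [q = 3] (mod 4)"
      then have "[q = 1] (mod 4)" using q(2) by (simp add: cong_def) presburger
      from geom_cong[OF this, of "?e q"] have "s q mod 4 = 2"
        using sp[OF q(1)] e2 by (simp add: cong_def)
      then show False using \<open>4 dvd s q\<close> by simp
    qed
    show ?thesis using c1 c2 by simp
  qed
  have ex1': "\<exists>!q. q \<in> ?P \<and> odd q \<and> odd (?e q)" using ex1 by (simp only: key)
  have all: "\<forall>q. q \<in> ?P \<and> odd q \<and> odd (?e q) \<longrightarrow> [?e q = 1] (mod 4) \<and> [q = 3] (mod 4)"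
  proof (intro allI impI)
    fix q assume "q \<in> ?P \<and> odd q \<and> odd (?e q)"
    then show "[?e q = 1] (mod 4) \<and> [q = 3] (mod 4)" using part2 by simp
  qed
  show ?thesis using ex1' all by (rule conjI)
qed

end
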